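(* If $(\Phi,D)$ is a domain-free s-continuous information algebra, then its associated labeled information algebra $(\Psi,D)$ is a labeled s-continuous information algebra, i.e., there is a family $\{\Gamma_x\}_{x\in D}$ making $(\Psi,\{\Gamma_x\}_{x\in D},D)$ a labeled s-continuous information algebra.
   Context: A domain-free information algebra $(\Phi,D)$ consists of a set $\Phi$, a lattice $D$, a combination $\otimes$ and a focusing $(\psi,x)\mapsto\psi^{\Rightarrow x}$ ($x\in D$) such that: $\otimes$ is associative, commutative with neutral element $e$; $(\psi^{\Rightarrow y})^{\Rightarrow x}=\psi^{\Rightarrow x\wedge y}$; $(\phi^{\Rightarrow x}\otimes\psi)^{\Rightarrow x}=\phi^{\Rightarrow x}\otimes\psi^{\Rightarrow x}$; every $\psi$ has some $x$ with $\psi^{\Rightarrow x}=\psi$; $\psi\otimes\psi^{\Rightarrow x}=\psi$. In both domain-free and labeled algebras, $\psi\le\phi$ iff $\psi\otimes\phi=\phi$; suprema refer to this order. $a\ll b$ means: for every directed $X$ with $b\le\vee X$ there is $c\in X$ with $a\le c$. A domain-free $(\Phi,D)$ with $D$ having a top element is s-continuous if there exists $\Gamma\subseteq\Phi$, closed under combination and containing $e$, such that every directed subset of $\Gamma$ has a supremum in $\Phi$ and $\phi^{\Rightarrow x}=\vee\{\psi\in\Gamma:\psi=\psi^{\Rightarrow x}\ll\phi\}$ for all $\phi\in\Phi$, $x\in D$. The associated labeled information algebra is $(\Psi,D)$ with $\Psi=\{(\phi,x)\in\Phi\times D:\phi=\phi^{\Rightarrow x}\}$, labeling $d(\phi,x)=x$,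 combination $(\phi,x)\otimes(\psi,y)=(\phi\otimes\psi,x\vee y)$, marginalization $(\phi,x)^{\downarrow y}=(\phi^{\Rightarrow y},y)$ for $y\le x$; its neutral elements are $e_x=(e,x)$. For a labeled information algebra (labeling $d$, combination $\otimes$, marginalization $\downarrow$, neutral elements $e_x$ with $d(e_x)=x$), write $\Phi_x$ for the elements with label $x$ and $\ll_x$ for the way-below relation of the poset $(\Phi_x,\le)$. A labeled s-continuous information algebra is a triple $(\Phi,\{\Gamma_x\}_{x\in D},D)$ with $D$ having a top element $\top$ and, for each $x\in D$, $\Gamma_x\subseteq\Phi_x$ closed under combination, containing $e_x$, such that: (convergency) every directed $X\subseteq\Gamma_x$ has a supremum $\vee X$ and $\vee X\in\Phi_x$; (strong density) for all $\phi\in\Phi_x$, $\phi=\vee\{\psi^{\downarrow x}\in\Gamma_x:\ \psi\in\Phi,\ x\le d(\psi),\ \psi^{\downarrow x}\otimes e_\top\in\Gamma_\top,\ \psi^{\downarrow x}\ll_x\phi\}$. *)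

theory Defs
  imports Main
begin

definition info_le :: "('b \<Rightarrow> 'b \<Rightarrow> 'b) \<Rightarrow> 'b \<Rightarrow> 'b \<Rightarrow> bool" where
  "info_le comb a b \<longleftrightarrow> comb a b = b"

definition is_sup_in :: "'b set \<Rightarrow> ('b \<Rightarrow> 'b \<Rightarrow> bool) \<Rightarrow> 'b set \<Rightarrow> 'b \<Rightarrow> bool" where
  "is_sup_in C le X s \<longleftrightarrow> s \<in> C \<and> (\<forall>a\<in>X. le a s) \<and>
     (\<forall>u\<in>C. (\<forall>a\<in>X. le a u) \<longrightarrow> le s u)"

definition directed_wrt :: "('b \<Rightarrow> 'b \<Rightarrow> bool) \<Rightarrow> 'b set \<Rightarrow> bool" where
  "directed_wrt le X \<longleftrightarrow> X \<noteq> {} \<and> (\<forall>a\<in>X. \<forall>b\<in>X. \<exists>c\<in>X. le a c \<and> le b c)"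

definition way_below_in :: "'b set \<Rightarrow> ('b \<Rightarrow> 'b \<Rightarrow> bool) \<Rightarrow> 'b \<Rightarrow> 'b \<Rightarrow> bool" where
  "way_below_in C le a b \<longleftrightarrow>
     (\<forall>X s. X \<subseteq> C \<longrightarrow> directed_wrt le X \<longrightarrow> is_sup_in C le X s \<longrightarrow> le b s \<longrightarrow>
        (\<exists>c\<in>X. le a c))"

section \<open>Domain-free information algebras (\<Phi> = the whole type 'a, D = the type 'd)\<close>

definition domain_free_info_algebra ::
  "('a \<Rightarrow> 'a \<Rightarrow> 'a) \<Rightarrow> 'a \<Rightarrow> ('a \<Rightarrow> 'd::lattice \<Rightarrow> 'a) \<Rightarrow> bool" where
  "domain_free_info_algebra comb e foc \<longleftrightarrow>
     (\<forall>a b c. comb (comb a b) c = comb a (comb b c)) \<and>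
     (\<forall>a b. comb a b = comb b a) \<and>
     (\<forall>a. comb e a = a) \<and>
     (\<forall>\<psi> x y. foc (foc \<psi> y) x = foc \<psi> (inf x y)) \<and>
     (\<forall>\<phi> \<psi> x. foc (comb (foc \<phi> x) \<psi>) x = comb (foc \<phi> x) (foc \<psi> x)) \<and>
     (\<forall>\<psi>. \<exists>x. foc \<psi> x = \<psi>) \<and>
     (\<forall>\<psi> x. comb \<psi> (foc \<psi> x) = \<psi>)"

definition df_s_continuous ::
  "('a \<Rightarrow> 'a \<Rightarrow> 'a) \<Rightarrow> 'a \<Rightarrow> ('a \<Rightarrow> 'd::bounded_lattice_top \<Rightarrow> 'a) \<Rightarrow> bool" where
  "df_s_continuous comb e foc \<longleftrightarrow>
     (\<exists>\<Gamma>. (\<forall>a\<in>\<Gamma>. \<forall>b\<in>\<Gamma>. comb a b \<in> \<Gamma>) \<and> e \<in> \<Gamma> \<and>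
        (\<forall>X. X \<subseteq> \<Gamma> \<longrightarrow> directed_wrt (info_le comb) X \<longrightarrow>
              (\<exists>s. is_sup_in UNIV (info_le comb) X s)) \<and>
        (\<forall>\<phi> x. is_sup_in UNIV (info_le comb)
                 {\<psi> \<in> \<Gamma>. \<psi> = foc \<psi> x \<and> way_below_in UNIV (info_le comb) \<psi> \<phi>}
                 (foc \<phi> x)))"

definition assoc_carrier :: "('a \<Rightarrow> 'd \<Rightarrow> 'a) \<Rightarrow> ('a \<times> 'd) set" where
  "assoc_carrier foc = {(\<phi>, x). \<phi> = foc \<phi> x}"

definition assoc_label :: "'a \<times> 'd \<Rightarrow> 'd" where
  "assoc_label p = snd p"

definition assoc_comb ::
  "('a \<Rightarrow> 'a \<Rightarrow> 'a) \<Rightarrow> 'a \<times> 'd::lattice \<Rightarrow> 'a \<times> 'd \<Rightarrow> 'a \<times> 'd" where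
  "assoc_comb comb p q = (comb (fst p) (fst q), sup (snd p) (snd q))"

text \<open>Marginalization (\<phi>,x)\<down>y = (\<phi>\<Rightarrow>y, y); only meaningful (and only used) for y \<le> x.\<close>
definition assoc_marg :: "('a \<Rightarrow> 'd \<Rightarrow> 'a) \<Rightarrow> 'a \<times> 'd \<Rightarrow> 'd \<Rightarrow> 'a \<times> 'd" where
  "assoc_marg foc p y = (foc (fst p) y, y)"

definition assoc_neutral :: "'a \<Rightarrow> 'd \<Rightarrow> 'a \<times> 'd" where
  "assoc_neutral e x = (e, x)"

text \<open>Psi: the carrier; d: labeling; comb: combination; marg: marginalization
  (marg \<psi> x = \<psi>\<down>x, used only for x \<le> d \<psi>); neut x = e_x; \<Gamma> x = \<Gamma>_x.\<close>
definition labeled_s_continuous ::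
  "'b set \<Rightarrow> ('b \<Rightarrow> 'd::bounded_lattice_top) \<Rightarrow> ('b \<Rightarrow> 'b \<Rightarrow> 'b) \<Rightarrow> ('b \<Rightarrow> 'd \<Rightarrow> 'b)
     \<Rightarrow> ('d \<Rightarrow> 'b) \<Rightarrow> ('d \<Rightarrow> 'b set) \<Rightarrow> bool" where
  "labeled_s_continuous Psi d comb marg neut \<Gamma> \<longleftrightarrow>
     (\<forall>x. \<Gamma> x \<subseteq> {p \<in> Psi. d p = x} \<and>
          (\<forall>a\<in>\<Gamma> x. \<forall>b\<in>\<Gamma> x. comb a b \<in> \<Gamma> x) \<and>
          neut x \<in> \<Gamma> x) \<and>
     (\<forall>x X. X \<subseteq> \<Gamma> x \<longrightarrow> directed_wrt (info_le comb) X \<longrightarrow>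
        (\<exists>s. is_sup_in Psi (info_le comb) X s \<and> d s = x)) \<and>
     (\<forall>x. \<forall>\<phi>\<in>{p \<in> Psi. d p = x}.
        is_sup_in Psi (info_le comb)
          {m. \<exists>\<psi>\<in>Psi. x \<le> d \<psi> \<and> m = marg \<psi> x \<and> m \<in> \<Gamma> x \<and>
               comb m (neut top) \<in> \<Gamma> top \<and>
               way_below_in {p \<in> Psi. d p = x} (info_le comb) m \<phi>}
          \<phi>)"

end

theory Submission
  imports Defs
begin

lemma dfA:
  assumes "domain_free_info_algebra comb e foc"
  shows "comb (comb a b) c = comb a (comb b c)" "comb a b = comb b a" "comb e a = a"
    "foc (foc \<psi> y) x = foc \<psi> (inf x y)"
    "foc (comb (foc \<phi> x) \<psi>) x = comb (foc \<phi> x) (foc \<psi> x)"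
    "\<exists>x. foc \<psi> x = \<psi>" "comb \<psi> (foc \<psi> x) = \<psi>"
  using assms unfolding domain_free_info_algebra_def by blast+

lemma df_idem:
  assumes "domain_free_info_algebra comb e foc"
  shows "comb a a = a"
proof -
  obtain x where "foc a x = a" using dfA(6)[OF assms] by blast
  then show ?thesis using dfA(7)[OF assms, of a x] by simp
qed

lemma df_foc_le:
  assumes "domain_free_info_algebra comb e foc"
  shows "info_le comb (foc u x) u"
  using dfA(2,7)[OF assms] unfolding info_le_def by metis

lemma df_mono:
  assumes A: "domain_free_info_algebra comb e foc" and "info_le comb a b"
  shows "info_le comb (foc a x) (foc b x)"
proof -
  have ab: "comb a b = b" using assms(2) unfolding info_le_def .
  have "comb (foc a x) (foc b x) = foc (comb (foc a x) b) x" using dfA(5)[OF A] by metis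
  also have "comb (foc a x) b = b"
  proof -
    have "comb (foc a x) b = comb (foc a x) (comb a b)" using ab by simp
    also have "\<dots> = comb (comb a (foc a x)) b" using dfA(1,2)[OF A] by metis
    also have "\<dots> = b" using dfA(7)[OF A] ab by simp
    finally show ?thesis .
  qed
  finally show ?thesis unfolding info_le_def by simp
qed

lemma df_foc_e:
  assumes A: "domain_free_info_algebra comb e foc"
  shows "foc e x = e"
  using dfA(3)[OF A, of "foc e x"] dfA(7)[OF A, of e x] by simp

lemma df_foc_top:
  assumes A: "domain_free_info_algebra comb e (foc :: 'a \<Rightarrow> 'd::bounded_lattice_top \<Rightarrow> 'a)"
  shows "foc \<psi> top = \<psi>"
proof -
  obtain x where x: "foc \<psi> x = \<psi>" using dfA(6)[OF A] by blast
  have "foc \<psi> top = foc (foc \<psi> x) top" using x by simp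
  also have "\<dots> = foc \<psi> x" using dfA(4)[OF A] by simp
  finally show ?thesis using x by simp
qed

lemma df_trans:
  assumes A: "domain_free_info_algebra comb e foc"
    and "info_le comb a b" "info_le comb b c"
  shows "info_le comb a c"
  using assms(2,3) dfA(1)[OF A, of a b c] unfolding info_le_def by metis

theorem theorem4p7:
  fixes comb :: "'a \<Rightarrow> 'a \<Rightarrow> 'a" and e :: 'a
    and foc :: "'a \<Rightarrow> 'd::bounded_lattice_top \<Rightarrow> 'a"
  assumes "domain_free_info_algebra comb e foc"
    and "df_s_continuous comb e foc"
  shows "\<exists>\<Gamma>. labeled_s_continuous (assoc_carrier foc) assoc_label (assoc_comb comb)
                (assoc_marg foc) (assoc_neutral e) \<Gamma>"
proof -
  note A = assms(1)
  obtain G where Gc: "\<forall>a\<in>G. \<forall>b\<in>G. comb a b \<in> G" and Ge: "e \<in> G"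
    and Gd: "\<And>X. X \<subseteq> G \<Longrightarrow> directed_wrt (info_le comb) X \<Longrightarrow>
              (\<exists>s. is_sup_in UNIV (info_le comb) X s)"
    and Gs: "\<And>\<phi> x. is_sup_in UNIV (info_le comb)
                 {\<psi> \<in> G. \<psi> = foc \<psi> x \<and> way_below_in UNIV (info_le comb) \<psi> \<phi>}
                 (foc \<phi> x)"
    using assms(2) unfolding df_s_continuous_def by blast
  define Psi where "Psi = assoc_carrier foc"
  have Psi_iff: "\<And>a y. (a, y) \<in> Psi \<longleftrightarrow> foc a y = a"
    unfolding Psi_def assoc_carrier_def by auto
  have le_iff: "\<And>a x b y. info_le (assoc_comb comb) (a, x) (b, y) \<longleftrightarrow>
      info_le comb a b \<and> x \<le> y"
    unfolding info_le_def assoc_comb_def by (auto simp: le_iff_sup)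
  have le_iff2: "\<And>p q. info_le (assoc_comb comb) p q \<longleftrightarrow>
      info_le comb (fst p) (fst q) \<and> snd p \<le> snd q"
    unfolding info_le_def assoc_comb_def by (auto simp: le_iff_sup prod_eq_iff)
  have Psi_iff2: "\<And>p. p \<in> Psi \<longleftrightarrow> foc (fst p) (snd p) = fst p"
    unfolding Psi_def assoc_carrier_def by auto
  define \<Gamma> where "\<Gamma> x = {p. \<exists>\<psi>. p = (\<psi>, x) \<and> \<psi> \<in> G \<and> foc \<psi> x = \<psi>}" for x :: 'd
  have part1: "\<forall>x. \<Gamma> x \<subseteq> {p \<in> Psi. assoc_label p = x} \<and>
          (\<forall>a\<in>\<Gamma> x. \<forall>b\<in>\<Gamma> x. assoc_comb comb a b \<in> \<Gamma> x) \<and>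
          assoc_neutral e x \<in> \<Gamma> x"
  proof (intro allI conjI)
    fix x
    show "\<Gamma> x \<subseteq> {p \<in> Psi. assoc_label p = x}"
      unfolding \<Gamma>_def assoc_label_def using Psi_iff by auto
    show "\<forall>a\<in>\<Gamma> x. \<forall>b\<in>\<Gamma> x. assoc_comb comb a b \<in> \<Gamma> x"
    proof (intro ballI)
      fix a b assume "a \<in> \<Gamma> x" "b \<in> \<Gamma> x"
      then obtain \<alpha> \<beta> where a: "a = (\<alpha>, x)" "\<alpha> \<in> G" "foc \<alpha> x = \<alpha>"
        and b: "b = (\<beta>, x)" "\<beta> \<in> G" "foc \<beta> x = \<beta>" unfolding \<Gamma>_def by blast
      have "foc (comb \<alpha> \<beta>) x = comb \<alpha> \<beta>"
        using dfA(5)[OF A, of \<alpha> x \<beta>] a b by simp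
      then show "assoc_comb comb a b \<in> \<Gamma> x"
        unfolding \<Gamma>_def assoc_comb_def using a b Gc by auto
    qed
    show "assoc_neutral e x \<in> \<Gamma> x"
      unfolding \<Gamma>_def assoc_neutral_def using Ge df_foc_e[OF A] by auto
  qed
  have part2: "\<forall>x X. X \<subseteq> \<Gamma> x \<longrightarrow> directed_wrt (info_le (assoc_comb comb)) X \<longrightarrow>
        (\<exists>s. is_sup_in Psi (info_le (assoc_comb comb)) X s \<and> assoc_label s = x)"
  proof (intro allI impI)
    fix x X assume XG: "X \<subseteq> \<Gamma> x" and dX: "directed_wrt (info_le (assoc_comb comb)) X"
    have Xs: "\<And>p. p \<in> X \<Longrightarrow> snd p = x \<and> fst p \<in> G \<and> foc (fst p) x = fst p"
      using XG unfolding \<Gamma>_def by auto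
    have dT: "directed_wrt (info_le comb) (fst ` X)"
      unfolding directed_wrt_def
    proof (intro conjI ballI)
      show "fst ` X \<noteq> {}" using dX unfolding directed_wrt_def by auto
    next
      fix a b assume "a \<in> fst ` X" "b \<in> fst ` X"
      then obtain p q where "p \<in> X" "q \<in> X" "a = fst p" "b = fst q" by auto
      then obtain c where "c \<in> X" "info_le (assoc_comb comb) p c" "info_le (assoc_comb comb) q c"
        using dX unfolding directed_wrt_def by blast
        then have "info_le comb a (fst c) \<and> info_le comb b (fst c)"
          using \<open>a = fst p\<close> \<open>b = fst q\<close> le_iff2 by blast
        then show "\<exists>c\<in>fst ` X. info_le comb a c \<and> info_le comb b c"
          using \<open>c \<in> X\<close> by blast
    qed
    obtain s where s: "is_sup_in UNIV (info_le comb) (fst ` X) s"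
      using Gd[OF _ dT] Xs by blast
    have sub: "\<forall>a\<in>fst ` X. info_le comb a s" using s unfolding is_sup_in_def by blast
    have "\<forall>a\<in>fst ` X. info_le comb a (foc s x)"
    proof
      fix a assume a: "a \<in> fst ` X"
      then have "foc a x = a" using Xs by auto
      moreover have "info_le comb (foc a x) (foc s x)" using df_mono[OF A] sub a by blast
      ultimately show "info_le comb a (foc s x)" by simp
    qed
    then have "info_le comb s (foc s x)" using s unfolding is_sup_in_def by blast
    then have fs: "foc s x = s" using df_foc_le[OF A, of s x] dfA(2)[OF A]
      unfolding info_le_def by metis
    have "is_sup_in Psi (info_le (assoc_comb comb)) X (s, x)"
      unfolding is_sup_in_def
    proof (intro conjI ballI impI)
      show "(s, x) \<in> Psi" using fs Psi_iff by simp
    next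
      fix a assume a: "a \<in> X"
      have "info_le comb (fst a) s" using sub a by blast
      moreover have "snd a = x" using Xs a by blast
      ultimately show "info_le (assoc_comb comb) a (s, x)"
        using le_iff2[of a "(s,x)"] by simp
    next
      fix u assume "u \<in> Psi" and ub: "\<forall>a\<in>X. info_le (assoc_comb comb) a u"
      obtain u1 u2 where u: "u = (u1, u2)" by fastforce
      obtain p where p: "p \<in> X" using dX unfolding directed_wrt_def by auto
      have "snd p \<le> snd u" using ub p le_iff2 by blast
      then have "x \<le> u2" using Xs[OF p] u by simp
      moreover have "\<forall>a\<in>fst ` X. info_le comb a u1"
      proof
        fix a assume "a \<in> fst ` X"
        then obtain q where q: "q \<in> X" "a = fst q" by blast
        then have "info_le (assoc_comb comb) q u" using ub by blast
        then show "info_le comb a u1" using le_iff2[of q u] q u by simp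
      qed
      then have "info_le comb s u1" using s unfolding is_sup_in_def by blast
      ultimately show "info_le (assoc_comb comb) (s, x) u" using u le_iff[of s x u1 u2] by simp
    qed
    then show "\<exists>s. is_sup_in Psi (info_le (assoc_comb comb)) X s \<and> assoc_label s = x"
      unfolding assoc_label_def by auto
  qed
  have part3: "\<forall>x. \<forall>\<phi>\<in>{p \<in> Psi. assoc_label p = x}.
        is_sup_in Psi (info_le (assoc_comb comb))
          {m. \<exists>\<psi>\<in>Psi. x \<le> assoc_label \<psi> \<and> m = assoc_marg foc \<psi> x \<and> m \<in> \<Gamma> x \<and>
               assoc_comb comb m (assoc_neutral e top) \<in> \<Gamma> top \<and>
               way_below_in {p \<in> Psi. assoc_label p = x} (info_le (assoc_comb comb)) m \<phi>}
          \<phi>"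
  proof (intro allI ballI)
    fix x \<Phi> assume "\<Phi> \<in> {p \<in> Psi. assoc_label p = x}"
    then obtain \<phi> where \<Phi>: "\<Phi> = (\<phi>, x)" and f\<phi>: "foc \<phi> x = \<phi>"
      unfolding assoc_label_def using Psi_iff2 by (cases \<Phi>) auto
    define Px where "Px = {p \<in> Psi. assoc_label p = x}"
    let ?le = "info_le (assoc_comb comb)"
    define M where "M = {m. \<exists>\<psi>\<in>Psi. x \<le> assoc_label \<psi> \<and> m = assoc_marg foc \<psi> x \<and> m \<in> \<Gamma> x \<and>
               assoc_comb comb m (assoc_neutral e top) \<in> \<Gamma> top \<and>
               way_below_in Px ?le m \<Phi>}"
    have \<Phi>Px: "\<Phi> \<in> Px" unfolding Px_def assoc_label_def using \<Phi> f\<phi> Psi_iff by simp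
    have refl: "\<And>a y. foc a y = a \<Longrightarrow> ?le (a, y) (a, y)"
      using df_idem[OF A] unfolding info_le_def assoc_comb_def by simp
    have wb_le: "\<And>m. way_below_in Px ?le m \<Phi> \<Longrightarrow> ?le m \<Phi>"
    proof -
      fix m assume wb: "way_below_in Px ?le m \<Phi>"
      have "directed_wrt ?le {\<Phi>}" unfolding directed_wrt_def using refl \<Phi> f\<phi> by auto
      moreover have "is_sup_in Px ?le {\<Phi>} \<Phi>" unfolding is_sup_in_def
        using \<Phi>Px refl \<Phi> f\<phi> by auto
      ultimately show "?le m \<Phi>" using wb \<Phi>Px refl \<Phi> f\<phi> unfolding way_below_in_def by blast
    qed
    have key: "\<And>\<chi>. way_below_in UNIV (info_le comb) \<chi> \<phi> \<Longrightarrow> way_below_in Px ?le (\<chi>, x) \<Phi>"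
    proof -
      fix \<chi> assume wb: "way_below_in UNIV (info_le comb) \<chi> \<phi>"
      show "way_below_in Px ?le (\<chi>, x) \<Phi>" unfolding way_below_in_def
      proof (intro allI impI)
        fix X S assume XP: "X \<subseteq> Px" and dX: "directed_wrt ?le X"
          and sS: "is_sup_in Px ?le X S" and \<Phi>S: "?le \<Phi> S"
        have Xs: "\<And>p. p \<in> X \<Longrightarrow> snd p = x \<and> foc (fst p) x = fst p"
          using XP unfolding Px_def assoc_label_def using Psi_iff2 by auto
        obtain s where S: "S = (s, x)" and fs: "foc s x = s"
          using sS unfolding is_sup_in_def Px_def assoc_label_def using Psi_iff2
          by (cases S) auto
        have dT: "directed_wrt (info_le comb) (fst ` X)"
          unfolding directed_wrt_def
        proof (intro conjI ballI)
          show "fst ` X \<noteq> {}" using dX unfolding directed_wrt_def by auto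
        next
          fix a b assume "a \<in> fst ` X" "b \<in> fst ` X"
          then obtain p q where "p \<in> X" "q \<in> X" "a = fst p" "b = fst q" by auto
          then obtain c where "c \<in> X" "?le p c" "?le q c"
            using dX unfolding directed_wrt_def by blast
          then have "info_le comb a (fst c) \<and> info_le comb b (fst c)"
            using \<open>a = fst p\<close> \<open>b = fst q\<close> le_iff2 by blast
          then show "\<exists>c\<in>fst ` X. info_le comb a c \<and> info_le comb b c"
            using \<open>c \<in> X\<close> by blast
        qed
        have sub: "\<forall>a\<in>fst ` X. info_le comb a s"
        proof
          fix a assume "a \<in> fst ` X"
          then obtain q where q: "q \<in> X" "a = fst q" by blast
          then have "?le q S" using sS unfolding is_sup_in_def by blast
          then show "info_le comb a s" using q S le_iff2[of q S] by simp
        qed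
        have "is_sup_in UNIV (info_le comb) (fst ` X) s" unfolding is_sup_in_def
        proof (intro conjI ballI impI)
          show "s \<in> UNIV" by simp
          show "\<And>a. a \<in> fst ` X \<Longrightarrow> info_le comb a s" using sub by blast
        next
          fix u assume "u \<in> UNIV" and ub: "\<forall>a\<in>fst ` X. info_le comb a u"
          have ub2: "\<forall>a\<in>fst ` X. info_le comb a (foc u x)"
          proof
            fix a assume a: "a \<in> fst ` X"
            then have "foc a x = a" using Xs by auto
            moreover have "info_le comb (foc a x) (foc u x)" using df_mono[OF A] ub a by blast
            ultimately show "info_le comb a (foc u x)" by simp
          qed
          have "(foc u x, x) \<in> Px" unfolding Px_def assoc_label_def
            using Psi_iff dfA(4)[OF A, of u x x] by simp
          moreover have "\<forall>a\<in>X. ?le a (foc u x, x)"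
          proof
            fix a assume a: "a \<in> X"
            then have "info_le comb (fst a) (foc u x)" using ub2 by blast
            then show "?le a (foc u x, x)" using Xs[OF a] le_iff2[of a "(foc u x, x)"] by simp
          qed
          ultimately have "?le S (foc u x, x)" using sS unfolding is_sup_in_def by blast
          then have "info_le comb s (foc u x)" using S by (simp add: le_iff)
          then show "info_le comb s u" using df_trans[OF A] df_foc_le[OF A] by blast
        qed
        moreover have "info_le comb \<phi> s" using \<Phi>S \<Phi> S by (simp add: le_iff)
        ultimately obtain c where "c \<in> fst ` X" "info_le comb \<chi> c"
          using wb dT unfolding way_below_in_def by blast
        then obtain q where q: "q \<in> X" "c = fst q" by blast
        then have "?le (\<chi>, x) q" using Xs[OF q(1)] le_iff2[of "(\<chi>, x)" q] \<open>info_le comb \<chi> c\<close> by simp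
        then show "\<exists>c\<in>X. ?le (\<chi>, x) c" using q by blast
      qed
    qed
    have inM: "\<And>\<chi>. \<chi> \<in> G \<Longrightarrow> foc \<chi> x = \<chi> \<Longrightarrow> way_below_in Px ?le (\<chi>, x) \<Phi> \<Longrightarrow> (\<chi>, x) \<in> M"
    proof -
      fix \<chi> assume h: "\<chi> \<in> G" "foc \<chi> x = \<chi>" "way_below_in Px ?le (\<chi>, x) \<Phi>"
      have "assoc_comb comb (\<chi>, x) (assoc_neutral e top) = (\<chi>, top)"
        unfolding assoc_comb_def assoc_neutral_def using dfA(2,3)[OF A] by simp
      moreover have "(\<chi>, top) \<in> \<Gamma> top" unfolding \<Gamma>_def using h df_foc_top[OF A] by simp
      ultimately show "(\<chi>, x) \<in> M" unfolding M_def
        using h Psi_iff unfolding assoc_label_def assoc_marg_def \<Gamma>_def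
        by (intro CollectI bexI[where x="(\<chi>, x)"]) auto
    qed
    have eM: "(e, x) \<in> M"
    proof (rule inM[OF Ge df_foc_e[OF A]])
      show "way_below_in Px ?le (e, x) \<Phi>" unfolding way_below_in_def
      proof (intro allI impI)
        fix X S assume XP: "X \<subseteq> Px" and dX: "directed_wrt ?le X"
        obtain p where p: "p \<in> X" using dX unfolding directed_wrt_def by auto
        then have "snd p = x" using XP unfolding Px_def assoc_label_def by auto
        then have "?le (e, x) p" using le_iff2[of "(e,x)" p] dfA(3)[OF A, of "fst p"]
          unfolding info_le_def by simp
        then show "\<exists>c\<in>X. ?le (e, x) c" using p by blast
      qed
    qed
    have "is_sup_in Psi ?le M \<Phi>" unfolding is_sup_in_def
    proof (intro conjI ballI impI)
      show "\<Phi> \<in> Psi" using \<Phi>Px unfolding Px_def by simp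
    next
      fix m assume "m \<in> M"
      then show "?le m \<Phi>" using wb_le unfolding M_def by blast
    next
      fix u assume "u \<in> Psi" and ub: "\<forall>a\<in>M. ?le a u"
      obtain u1 u2 where u: "u = (u1, u2)" by fastforce
      have xu: "x \<le> u2" using ub eM u by (auto simp add: le_iff)
      have "\<forall>\<chi>\<in>{\<psi> \<in> G. \<psi> = foc \<psi> x \<and> way_below_in UNIV (info_le comb) \<psi> \<phi>}. info_le comb \<chi> u1"
      proof
        fix \<chi> assume "\<chi> \<in> {\<psi> \<in> G. \<psi> = foc \<psi> x \<and> way_below_in UNIV (info_le comb) \<psi> \<phi>}"
        then have h: "\<chi> \<in> G" "foc \<chi> x = \<chi>" "way_below_in UNIV (info_le comb) \<chi> \<phi>" by auto
        have "(\<chi>, x) \<in> M" using inM[OF h(1,2) key[OF h(3)]] .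
        then have "?le (\<chi>, x) u" using ub by blast
        then show "info_le comb \<chi> u1" using u by (simp add: le_iff)
      qed
      then have "info_le comb (foc \<phi> x) u1" using Gs[of x \<phi>] unfolding is_sup_in_def by blast
      then show "?le \<Phi> u" using \<Phi> f\<phi> u xu by (simp add: le_iff)
    qed
    then show "is_sup_in Psi ?le
          {m. \<exists>\<psi>\<in>Psi. x \<le> assoc_label \<psi> \<and> m = assoc_marg foc \<psi> x \<and> m \<in> \<Gamma> x \<and>
               assoc_comb comb m (assoc_neutral e top) \<in> \<Gamma> top \<and>
               way_below_in {p \<in> Psi. assoc_label p = x} ?le m \<Phi>} \<Phi>"
      unfolding M_def Px_def .
  qed
  show ?thesis
    using part1 part2 part3 unfolding labeled_s_continuous_def Psi_def by blast
qed

end
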